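(* Let $\Theta$ be a causal theory over $\mathfrak L$. The map $\Sigma\mapsto\Sigma\cap\mathfrak L$ is a bijection from the set of maximal $\vdash_\Box$-consistent subsets $\Sigma$ of $\mathcal L_\Box$ onto the set of maximal classically consistent subsets of $\mathfrak L$ (i.e. onto $\mathfrak M$).
   Context: $\mathfrak L$ is a classical propositional language; $\mathfrak M$ is the set of its models, identified with the maximal classically consistent subsets of $\mathfrak L$. A causal rule is $\phi\triangleright\psi$ with $\phi,\psi\in\mathfrak L$; a causal theory $\Theta$ is a set of causal rules. $\mathcal L_\Box$ is generated by $\mathfrak L$ and a unary $\Box$. A set $\Sigma\subseteq\mathcal L_\Box$ is $\vdash_\Box$-consistent if the sequent $\Sigma\vdash_\Box$ (empty right side) is not derivable in $\mathbf S_\Theta$, and maximal if it has no proper $\vdash_\Box$-consistent superset. The sequent calculus $\mathbf S_\Theta$ derives sequents $\Gamma\vdash_\Box\Delta$ (collections possibly infinite; derivations well-founded, possibly infinitely branching) via: axiom $p\vdash_\Box p$; $\perp\vdash_\Box$; $\vdash_\Box\top$; weakening and contraction; classical two-sided LK rules for $\neg,\wedge,\vee,\to$ with shared contexts; $\Box$R: if $\phi_1\triangleright\psi_1,\dots,\phi_k\triangleright\psi_k\in\Theta$ and $\psi_1,\dots,\psi_k\vdash_\Box p$ is derivable, from $\Gamma\vdash_\Box\phi_1\wedge\dots\wedge\phi_k,\Delta$ infer $\Gamma\vdash_\Box\Box p,\Delta$; $\Box$L: letting $\{S_j\}_{j\in J}$ be all finite $S_j\subseteq\Theta$ with $\{\psi:\phi\triangleright\psi\in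 S_j\}\vdash_\Box p$ derivable, from $\Gamma,\{\phi:\phi\triangleright\psi\in S_j\}\vdash_\Box\Delta$ for all $j\in J$ infer $\Gamma,\Box p\vdash_\Box\Delta$; multicut: from $\Gamma\vdash_\Box p^m,\Delta$ and $\Gamma',p^n\vdash_\Box\Delta'$ ($m,n>0$) infer $\Gamma,\Gamma'\vdash_\Box\Delta,\Delta'$. *)

theory Defs
  imports Main
begin

datatype 'a fm =
    Atom 'a | Bot | Top | Neg "'a fm" | And "'a fm" "'a fm" | Or "'a fm" "'a fm"
  | Imp "'a fm" "'a fm" | Box "'a fm"

primrec depth :: "'a fm \<Rightarrow> nat" where
  "depth (Atom x) = 0"
| "depth Bot = 0"
| "depth Top = 0"
| "depth (Neg A) = depth A"
| "depth (And A B) = max (depth A) (depth B)"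
| "depth (Or A B) = max (depth A) (depth B)"
| "depth (Imp A B) = max (depth A) (depth B)"
| "depth (Box A) = Suc (depth A)"

definition langL :: "'a fm set" where
  "langL = {A. depth A = 0}"

text \<open>Classical semantics (only used on box-free formulas).\<close>
primrec eval :: "('a \<Rightarrow> bool) \<Rightarrow> 'a fm \<Rightarrow> bool" where
  "eval v (Atom x) = v x"
| "eval v Bot = False"
| "eval v Top = True"
| "eval v (Neg A) = (\<not> eval v A)"
| "eval v (And A B) = (eval v A \<and> eval v B)"
| "eval v (Or A B) = (eval v A \<or> eval v B)"
| "eval v (Imp A B) = (eval v A \<longrightarrow> eval v B)"
| "eval v (Box A) = False"

definition cl_consistent :: "'a fm set \<Rightarrow> bool" where
  "cl_consistent \<Gamma> \<longleftrightarrow> (\<exists>v. \<forall>A\<in>\<Gamma>. eval v A)"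

definition models :: "'a fm set set" where
  "models = {\<Gamma>. \<Gamma> \<subseteq> langL \<and> cl_consistent \<Gamma> \<and>
                 (\<forall>\<Gamma>'. \<Gamma> \<subset> \<Gamma>' \<and> \<Gamma>' \<subseteq> langL \<longrightarrow> \<not> cl_consistent \<Gamma>')}"

fun conjs :: "'a fm list \<Rightarrow> 'a fm" where
  "conjs [] = Top"
| "conjs [A] = A"
| "conjs (A # As) = And A (conjs As)"

text \<open>Causal rules phi |> psi are pairs (phi, psi). Sequents are pairs of (possibly infinite)
  sets, so contraction is built in. The side condition of the Box rules
  (derivability of psi_1,...,psi_k |- p) is supplied by the parameter side;
  Box rules at level n are only available for Box p with depth p < n.\<close>

inductive calc :: "('a fm \<times> 'a fm) set \<Rightarrow> nat \<Rightarrow> ('a fm set \<Rightarrow> 'a fm \<Rightarrow> bool)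
                   \<Rightarrow> 'a fm set \<Rightarrow> 'a fm set \<Rightarrow> bool"
  for \<Theta> n side where
  ax: "calc \<Theta> n side {A} {A}"
| botL: "calc \<Theta> n side {Bot} {}"
| topR: "calc \<Theta> n side {} {Top}"
| weak: "calc \<Theta> n side \<Gamma> \<Delta> \<Longrightarrow> \<Gamma> \<subseteq> \<Gamma>' \<Longrightarrow> \<Delta> \<subseteq> \<Delta>' \<Longrightarrow> calc \<Theta> n side \<Gamma>' \<Delta>'"
| negL: "calc \<Theta> n side \<Gamma> (insert A \<Delta>) \<Longrightarrow> calc \<Theta> n side (insert (Neg A) \<Gamma>) \<Delta>"
| negR: "calc \<Theta> n side (insert A \<Gamma>) \<Delta> \<Longrightarrow> calc \<Theta> n side \<Gamma> (insert (Neg A) \<Delta>)"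
| andL: "calc \<Theta> n side (insert A (insert B \<Gamma>)) \<Delta> \<Longrightarrow> calc \<Theta> n side (insert (And A B) \<Gamma>) \<Delta>"
| andR: "calc \<Theta> n side \<Gamma> (insert A \<Delta>) \<Longrightarrow> calc \<Theta> n side \<Gamma> (insert B \<Delta>)
          \<Longrightarrow> calc \<Theta> n side \<Gamma> (insert (And A B) \<Delta>)"
| orL: "calc \<Theta> n side (insert A \<Gamma>) \<Delta> \<Longrightarrow> calc \<Theta> n side (insert B \<Gamma>) \<Delta>
          \<Longrightarrow> calc \<Theta> n side (insert (Or A B) \<Gamma>) \<Delta>"
| orR: "calc \<Theta> n side \<Gamma> (insert A (insert B \<Delta>)) \<Longrightarrow> calc \<Theta> n side \<Gamma> (insert (Or A B) \<Delta>)"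
| impL: "calc \<Theta> n side \<Gamma> (insert A \<Delta>) \<Longrightarrow> calc \<Theta> n side (insert B \<Gamma>) \<Delta>
          \<Longrightarrow> calc \<Theta> n side (insert (Imp A B) \<Gamma>) \<Delta>"
| impR: "calc \<Theta> n side (insert A \<Gamma>) (insert B \<Delta>) \<Longrightarrow> calc \<Theta> n side \<Gamma> (insert (Imp A B) \<Delta>)"
| boxR: "set rs \<subseteq> \<Theta> \<Longrightarrow> depth p < n \<Longrightarrow> side (snd ` set rs) p
          \<Longrightarrow> calc \<Theta> n side \<Gamma> (insert (conjs (map fst rs)) \<Delta>)
          \<Longrightarrow> calc \<Theta> n side \<Gamma> (insert (Box p) \<Delta>)"
| boxL: "depth p < n \<Longrightarrow>
          (\<And>S. finite S \<Longrightarrow> S \<subseteq> \<Theta> \<Longrightarrow> side (snd ` S) p \<Longrightarrow> calc \<Theta> n side (\<Gamma> \<union> fst ` S) \<Delta>)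
          \<Longrightarrow> calc \<Theta> n side (insert (Box p) \<Gamma>) \<Delta>"
| cut: "calc \<Theta> n side \<Gamma> (insert A \<Delta>) \<Longrightarrow> calc \<Theta> n side (insert A \<Gamma>') \<Delta>'
          \<Longrightarrow> calc \<Theta> n side (\<Gamma> \<union> \<Gamma>') (\<Delta> \<union> \<Delta>')"

text \<open>Stratification by Box depth: lvl Theta n k is the level-k calculus (for k \<le> n);
  the side condition for Box p is derivability at level depth p.\<close>
primrec lvl :: "('a fm \<times> 'a fm) set \<Rightarrow> nat \<Rightarrow> nat \<Rightarrow> 'a fm set \<Rightarrow> 'a fm set \<Rightarrow> bool" where
  "lvl \<Theta> 0 = (\<lambda>k. calc \<Theta> 0 (\<lambda>_ _. False))"
| "lvl \<Theta> (Suc n) = (\<lambda>k. if k \<le> n then lvl \<Theta> n k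
                        else calc \<Theta> (Suc n) (\<lambda>\<Psi> p. lvl \<Theta> n (depth p) \<Psi> {p}))"

definition derivable :: "('a fm \<times> 'a fm) set \<Rightarrow> 'a fm set \<Rightarrow> 'a fm set \<Rightarrow> bool" where
  "derivable \<Theta> \<Gamma> \<Delta> \<longleftrightarrow> (\<exists>n. lvl \<Theta> n n \<Gamma> \<Delta>)"

definition box_consistent :: "('a fm \<times> 'a fm) set \<Rightarrow> 'a fm set \<Rightarrow> bool" where
  "box_consistent \<Theta> \<Sigma> \<longleftrightarrow> \<not> derivable \<Theta> \<Sigma> {}"

definition max_box_consistent :: "('a fm \<times> 'a fm) set \<Rightarrow> 'a fm set \<Rightarrow> bool" where
  "max_box_consistent \<Theta> \<Sigma> \<longleftrightarrow> box_consistent \<Theta> \<Sigma> \<and>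
     (\<forall>\<Sigma>'. \<Sigma> \<subset> \<Sigma>' \<longrightarrow> \<not> box_consistent \<Theta> \<Sigma>')"

end

theory Submission
  imports Defs
begin

definition sC :: "('a fm \<times> 'a fm) set \<Rightarrow> 'a fm set \<Rightarrow> 'a fm \<Rightarrow> bool" where
  "sC \<Theta> \<Psi> p = lvl \<Theta> (depth p) (depth p) \<Psi> {p}"

primrec xeval :: "('a fm \<times> 'a fm) set \<Rightarrow> ('a \<Rightarrow> bool) \<Rightarrow> 'a fm \<Rightarrow> bool" where
  "xeval \<Theta> v (Atom x) = v x"
| "xeval \<Theta> v Bot = False"
| "xeval \<Theta> v Top = True"
| "xeval \<Theta> v (Neg A) = (\<not> xeval \<Theta> v A)"
| "xeval \<Theta> v (And A B) = (xeval \<Theta> v A \<and> xeval \<Theta> v B)"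
| "xeval \<Theta> v (Or A B) = (xeval \<Theta> v A \<or> xeval \<Theta> v B)"
| "xeval \<Theta> v (Imp A B) = (xeval \<Theta> v A \<longrightarrow> xeval \<Theta> v B)"
| "xeval \<Theta> v (Box p) = (\<exists>S. finite S \<and> S \<subseteq> \<Theta> \<and> (\<forall>\<phi>\<in>fst ` S. eval v \<phi>) \<and> sC \<Theta> (snd ` S) p)"

lemma lvl_le: "k \<le> m \<Longrightarrow> lvl \<Theta> m k = lvl \<Theta> k k"
proof (induction m)
  case 0 then show ?case by simp
next
  case (Suc m)
  show ?case
  proof (cases "k \<le> m")
    case True then show ?thesis using Suc by simp
  next
    case False then have "k = Suc m" using Suc.prems by simp
    then show ?thesis by simp
  qed
qed

lemma calc_side_cong:
  "calc \<Theta> n s \<Gamma> \<Delta> \<Longrightarrow> (\<And>\<Psi> p. depth p < n \<Longrightarrow> s \<Psi> p = s' \<Psi> p) \<Longrightarrow> calc \<Theta> n s' \<Gamma> \<Delta>"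
proof (induction rule: calc.induct)
  case (boxR rs p \<Gamma> \<Delta>)
  then show ?case by (metis calc.boxR)
next
  case (boxL p \<Gamma> \<Delta>)
  then show ?case by (intro calc.boxL) auto
qed (auto intro: calc.intros)

lemma calc_mono_n:
  "calc \<Theta> n s \<Gamma> \<Delta> \<Longrightarrow> n \<le> m \<Longrightarrow> calc \<Theta> m s \<Gamma> \<Delta>"
proof (induction rule: calc.induct)
  case (boxR rs p \<Gamma> \<Delta>)
  then show ?case by (intro calc.boxR) auto
next
  case (boxL p \<Gamma> \<Delta>)
  then show ?case by (intro calc.boxL) auto
qed (auto intro: calc.intros)

lemma lvl_calc: "lvl \<Theta> n n = calc \<Theta> n (sC \<Theta>)"
proof (cases n)
  case 0
  have "calc \<Theta> 0 (\<lambda>_ _. False) \<Gamma> \<Delta> = calc \<Theta> 0 (sC \<Theta>) \<Gamma> \<Delta>" for \<Gamma> \<Delta>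
    by (rule iffI; erule calc_side_cong; simp)
  then show ?thesis unfolding 0 by (intro ext) simp
next
  case (Suc m)
  have e: "depth p < Suc m \<Longrightarrow> lvl \<Theta> m (depth p) \<Psi> {p} = sC \<Theta> \<Psi> p" for \<Psi> p
    using lvl_le[of "depth p" m \<Theta>] by (simp add: sC_def)
  show ?thesis unfolding Suc
    by (intro ext iffI; simp; erule calc_side_cong; simp add: e)
qed

lemma derivable_iff: "derivable \<Theta> \<Gamma> \<Delta> \<longleftrightarrow> (\<exists>n. calc \<Theta> n (sC \<Theta>) \<Gamma> \<Delta>)"
  by (simp add: derivable_def lvl_calc)

lemma sC_calc: "sC \<Theta> \<Psi> p = calc \<Theta> (depth p) (sC \<Theta>) \<Psi> {p}"
  by (simp add: sC_def lvl_calc)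

lemma xeval_L: "depth A = 0 \<Longrightarrow> xeval \<Theta> v A = eval v A"
  by (induction A) auto

lemma xeval_conjs: "xeval \<Theta> v (conjs xs) = (\<forall>x\<in>set xs. xeval \<Theta> v x)"
  by (induction xs rule: conjs.induct) auto

lemma sound:
  assumes Th: "\<forall>(\<phi>, \<psi>) \<in> \<Theta>. \<phi> \<in> langL \<and> \<psi> \<in> langL"
  shows "calc \<Theta> n (sC \<Theta>) \<Gamma> \<Delta> \<Longrightarrow> \<forall>A\<in>\<Gamma>. xeval \<Theta> v A \<Longrightarrow> \<exists>B\<in>\<Delta>. xeval \<Theta> v B"
proof (induction rule: calc.induct)
  case (boxR rs p \<Gamma> \<Delta>)
  have fL: "\<phi> \<in> fst ` set rs \<Longrightarrow> depth \<phi> = 0" for \<phi>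
    using boxR.hyps(1) Th by (auto simp: langL_def)
  from boxR.IH boxR.prems obtain B where B: "B \<in> insert (conjs (map fst rs)) \<Delta>" "xeval \<Theta> v B" by blast
  show ?case
  proof (cases "B = conjs (map fst rs)")
    case True
    then have "\<forall>\<phi>\<in>fst ` set rs. xeval \<Theta> v \<phi>" using B(2) by (auto simp: xeval_conjs)
    then have "\<forall>\<phi>\<in>fst ` set rs. eval v \<phi>" using fL xeval_L by metis
    then have "xeval \<Theta> v (Box p)" using boxR.hyps by (auto intro!: exI[of _ "set rs"])
    then show ?thesis by blast
  next
    case False then show ?thesis using B by blast
  qed
next
  case (boxL p \<Gamma> \<Delta>)
  then obtain S where S: "finite S" "S \<subseteq> \<Theta>" "\<forall>\<phi>\<in>fst ` S. eval v \<phi>" "sC \<Theta> (snd ` S) p" by auto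
  have fL: "\<phi> \<in> fst ` S \<Longrightarrow> depth \<phi> = 0" for \<phi>
    using S(2) Th by (auto simp: langL_def)
  have "\<forall>A\<in>fst ` S. xeval \<Theta> v A" using S(3) fL xeval_L by metis
  then have "\<forall>A\<in>\<Gamma> \<union> fst ` S. xeval \<Theta> v A" using boxL.prems by blast
  then show ?case using boxL.IH S by blast
next
  case (cut \<Gamma> A \<Delta> \<Gamma>' \<Delta>')
  then show ?case by auto
qed auto


lemma der_weak: "derivable \<Theta> \<Gamma> \<Delta> \<Longrightarrow> \<Gamma> \<subseteq> \<Gamma>' \<Longrightarrow> \<Delta> \<subseteq> \<Delta>' \<Longrightarrow> derivable \<Theta> \<Gamma>' \<Delta>'"
  unfolding derivable_iff by (blast intro: calc.weak)

lemma der_cut: "derivable \<Theta> \<Gamma> (insert A \<Delta>) \<Longrightarrow> derivable \<Theta> (insert A \<Gamma>') \<Delta>'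
   \<Longrightarrow> derivable \<Theta> (\<Gamma> \<union> \<Gamma>') (\<Delta> \<union> \<Delta>')"
proof -
  assume "derivable \<Theta> \<Gamma> (insert A \<Delta>)" "derivable \<Theta> (insert A \<Gamma>') \<Delta>'"
  then obtain n m where "calc \<Theta> n (sC \<Theta>) \<Gamma> (insert A \<Delta>)" "calc \<Theta> m (sC \<Theta>) (insert A \<Gamma>') \<Delta>'"
    unfolding derivable_iff by blast
  then have "calc \<Theta> (max n m) (sC \<Theta>) \<Gamma> (insert A \<Delta>)" "calc \<Theta> (max n m) (sC \<Theta>) (insert A \<Gamma>') \<Delta>'"
    by (auto elim!: calc_mono_n)
  then show ?thesis unfolding derivable_iff by (blast intro: calc.cut)
qed

lemma der0: "calc \<Theta> 0 (sC \<Theta>) \<Gamma> \<Delta> \<Longrightarrow> derivable \<Theta> \<Gamma> \<Delta>"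
  unfolding derivable_iff by blast

lemma c_negax: "calc \<Theta> n s {Neg A, A} {}"
  by (rule calc.negL) (rule calc.ax)

lemma c_ax: "A \<in> \<Gamma> \<Longrightarrow> A \<in> \<Delta> \<Longrightarrow> calc \<Theta> n s \<Gamma> \<Delta>"
  by (rule calc.weak[OF calc.ax]) auto

lemma c_negax': "Neg A \<in> \<Gamma> \<Longrightarrow> A \<in> \<Gamma> \<Longrightarrow> calc \<Theta> n s \<Gamma> \<Delta>"
  by (rule calc.weak[OF c_negax]) auto

context
  fixes \<Theta> :: "('a fm \<times> 'a fm) set" and \<Sigma> :: "'a fm set"
  assumes mc: "max_box_consistent \<Theta> \<Sigma>"
begin

lemma cons: "\<not> derivable \<Theta> \<Sigma> {}"
  using mc by (simp add: max_box_consistent_def box_consistent_def)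

lemma notin_der: "A \<notin> \<Sigma> \<Longrightarrow> derivable \<Theta> (insert A \<Sigma>) {}"
  using mc unfolding max_box_consistent_def box_consistent_def by blast

lemma derR: "derivable \<Theta> \<Gamma> {A} \<Longrightarrow> \<Gamma> \<subseteq> \<Sigma> \<Longrightarrow> A \<in> \<Sigma>"
proof (rule ccontr)
  assume d: "derivable \<Theta> \<Gamma> {A}" "\<Gamma> \<subseteq> \<Sigma>" "A \<notin> \<Sigma>"
  have "derivable \<Theta> (\<Gamma> \<union> \<Sigma>) ({} \<union> {})"
    by (rule der_cut[OF _ notin_der[OF d(3)]]) (use d in simp)
  then show False using cons d(2) by (simp add: Un_absorb1)
qed

lemma derR0: "calc \<Theta> 0 (sC \<Theta>) \<Gamma> {A} \<Longrightarrow> \<Gamma> \<subseteq> \<Sigma> \<Longrightarrow> A \<in> \<Sigma>"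
  using derR der0 by blast

lemma neg_in: "A \<notin> \<Sigma> \<Longrightarrow> Neg A \<in> \<Sigma>"
proof -
  assume "A \<notin> \<Sigma>"
  then obtain n where "calc \<Theta> n (sC \<Theta>) (insert A \<Sigma>) {}" using notin_der derivable_iff by blast
  then have "calc \<Theta> n (sC \<Theta>) \<Sigma> {Neg A}" using calc.negR[of \<Theta> n _ A \<Sigma> "{}"] by simp
  then show ?thesis by (intro derR[of \<Sigma>]) (auto simp: derivable_iff)
qed

lemma not_both: "A \<in> \<Sigma> \<Longrightarrow> Neg A \<notin> \<Sigma>"
  using cons c_negax'[of A \<Sigma> \<Theta> 0 "sC \<Theta>" "{}"] der0 by blast

lemma mc_Neg: "Neg A \<in> \<Sigma> \<longleftrightarrow> A \<notin> \<Sigma>"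
  using neg_in not_both by blast

lemma mc_Bot: "Bot \<notin> \<Sigma>"
proof
  assume "Bot \<in> \<Sigma>"
  then have "calc \<Theta> 0 (sC \<Theta>) \<Sigma> {}" by (intro calc.weak[OF calc.botL]) auto
  then show False using cons der0 by blast
qed

lemma mc_Top: "Top \<in> \<Sigma>"
  by (rule derR[of "{}"]) (auto intro: der0 calc.topR)

lemma mc_And: "And A B \<in> \<Sigma> \<longleftrightarrow> A \<in> \<Sigma> \<and> B \<in> \<Sigma>"
proof
  assume h: "And A B \<in> \<Sigma>"
  have c1: "calc \<Theta> 0 (sC \<Theta>) (insert (And A B) {}) {A}"
    by (rule calc.andL) (rule c_ax; auto)
  have c2: "calc \<Theta> 0 (sC \<Theta>) (insert (And A B) {}) {B}"
    by (rule calc.andL) (rule c_ax; auto)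
  show "A \<in> \<Sigma> \<and> B \<in> \<Sigma>" using derR0[OF c1] derR0[OF c2] h by simp
next
  assume h: "A \<in> \<Sigma> \<and> B \<in> \<Sigma>"
  have "calc \<Theta> 0 (sC \<Theta>) {A, B} (insert (And A B) {})"
    by (rule calc.andR; rule c_ax; auto)
  then show "And A B \<in> \<Sigma>" using h by (elim derR0) simp
qed

lemma mc_Or: "Or A B \<in> \<Sigma> \<longleftrightarrow> A \<in> \<Sigma> \<or> B \<in> \<Sigma>"
proof
  assume h: "Or A B \<in> \<Sigma>"
  show "A \<in> \<Sigma> \<or> B \<in> \<Sigma>"
  proof (rule ccontr)
    assume "\<not> (A \<in> \<Sigma> \<or> B \<in> \<Sigma>)"
    then have n: "Neg A \<in> \<Sigma>" "Neg B \<in> \<Sigma>" using neg_in by auto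
    have "calc \<Theta> 0 (sC \<Theta>) (insert (Or A B) {Neg A, Neg B}) {}"
      apply (rule calc.orL)
       apply (rule c_negax'[of A]; simp)
      apply (rule c_negax'[of B]; simp)
      done
    then have "calc \<Theta> 0 (sC \<Theta>) \<Sigma> {}" by (rule calc.weak) (use h n in auto)
    then show False using cons der0 by blast
  qed
next
  assume h: "A \<in> \<Sigma> \<or> B \<in> \<Sigma>"
  have c1: "calc \<Theta> 0 (sC \<Theta>) {A} (insert (Or A B) {})"
    by (rule calc.orR) (rule c_ax; auto)
  have c2: "calc \<Theta> 0 (sC \<Theta>) {B} (insert (Or A B) {})"
    by (rule calc.orR) (rule c_ax[of B]; auto)
  show "Or A B \<in> \<Sigma>" using h derR0[OF c1] derR0[OF c2] by auto
qed

lemma mc_Imp: "Imp A B \<in> \<Sigma> \<longleftrightarrow> (A \<in> \<Sigma> \<longrightarrow> B \<in> \<Sigma>)"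
proof
  assume h: "Imp A B \<in> \<Sigma>"
  have "calc \<Theta> 0 (sC \<Theta>) (insert (Imp A B) {A}) {B}"
    by (rule calc.impL; rule c_ax; auto)
  then show "A \<in> \<Sigma> \<longrightarrow> B \<in> \<Sigma>" using h derR0 by simp
next
  assume h: "A \<in> \<Sigma> \<longrightarrow> B \<in> \<Sigma>"
  show "Imp A B \<in> \<Sigma>"
  proof (cases "A \<in> \<Sigma>")
    case True
    have "calc \<Theta> 0 (sC \<Theta>) {B} (insert (Imp A B) {})"
      by (rule calc.impR) (rule c_ax; auto)
    then show ?thesis using h True by (elim derR0) simp
  next
    case False
    then have n: "Neg A \<in> \<Sigma>" using neg_in by auto
    have "calc \<Theta> 0 (sC \<Theta>) {Neg A} (insert (Imp A B) {})"
      by (rule calc.impR) (rule c_negax'[of A]; simp)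
    then show ?thesis using n by (elim derR0) simp
  qed
qed

lemma conjs_in: "set xs \<subseteq> \<Sigma> \<Longrightarrow> conjs xs \<in> \<Sigma>"
  by (induction xs rule: conjs.induct) (auto simp: mc_Top mc_And)

lemma mc_Box: "Box p \<in> \<Sigma> \<longleftrightarrow> (\<exists>S. finite S \<and> S \<subseteq> \<Theta> \<and> fst ` S \<subseteq> \<Sigma> \<and> sC \<Theta> (snd ` S) p)"
proof
  assume h: "Box p \<in> \<Sigma>"
  show "\<exists>S. finite S \<and> S \<subseteq> \<Theta> \<and> fst ` S \<subseteq> \<Sigma> \<and> sC \<Theta> (snd ` S) p"
  proof (rule ccontr)
    assume nS: "\<not> ?thesis"
    have "calc \<Theta> (Suc (depth p)) (sC \<Theta>) (insert (Box p) \<Sigma>) {}"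
    proof (rule calc.boxL)
      fix S assume S: "finite S" "S \<subseteq> \<Theta>" "sC \<Theta> (snd ` S) p"
      then obtain \<phi> where \<phi>: "\<phi> \<in> fst ` S" "\<phi> \<notin> \<Sigma>" using nS by blast
      then have "Neg \<phi> \<in> \<Sigma>" using neg_in by auto
      then show "calc \<Theta> (Suc (depth p)) (sC \<Theta>) (\<Sigma> \<union> fst ` S) {}"
        using \<phi> by (intro c_negax'[of \<phi>]) auto
    qed simp
    then have "calc \<Theta> (Suc (depth p)) (sC \<Theta>) \<Sigma> {}" using h by (simp add: insert_absorb)
    then show False using cons derivable_iff by blast
  qed
next
  assume "\<exists>S. finite S \<and> S \<subseteq> \<Theta> \<and> fst ` S \<subseteq> \<Sigma> \<and> sC \<Theta> (snd ` S) p"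
  then obtain S where S: "finite S" "S \<subseteq> \<Theta>" "fst ` S \<subseteq> \<Sigma>" "sC \<Theta> (snd ` S) p" by blast
  obtain rs where rs: "set rs = S" using S(1) finite_list by blast
  have "calc \<Theta> (Suc (depth p)) (sC \<Theta>) {conjs (map fst rs)} (insert (Box p) {})"
    by (rule calc.boxR[of rs]) (use S rs in \<open>auto intro: c_ax\<close>)
  moreover have "conjs (map fst rs) \<in> \<Sigma>" using S(3) rs by (intro conjs_in) auto
  ultimately show "Box p \<in> \<Sigma>" by (intro derR[of "{conjs (map fst rs)}"]) (auto simp: derivable_iff)
qed

lemma mc_L0: "depth A = 0 \<Longrightarrow> A \<in> \<Sigma> \<longleftrightarrow> eval (\<lambda>x. Atom x \<in> \<Sigma>) A"
  by (induction A) (auto simp: mc_Neg mc_Bot mc_Top mc_And mc_Or mc_Imp)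

lemma mc_truth:
  assumes Th: "\<forall>(\<phi>, \<psi>) \<in> \<Theta>. \<phi> \<in> langL \<and> \<psi> \<in> langL"
  shows "A \<in> \<Sigma> \<longleftrightarrow> xeval \<Theta> (\<lambda>x. Atom x \<in> \<Sigma>) A"
proof (induction A)
  case (Box p)
  have eq: "(fst ` S \<subseteq> \<Sigma>) = (\<forall>\<phi>\<in>fst ` S. eval (\<lambda>x. Atom x \<in> \<Sigma>) \<phi>)" if S: "S \<subseteq> \<Theta>" for S
  proof -
    have "depth a = 0" if ab: "(a, b) \<in> S" for a b
    proof -
      have "(a, b) \<in> \<Theta>" using S ab by blast
      then show ?thesis using bspec[OF Th \<open>(a, b) \<in> \<Theta>\<close>] by (simp add: langL_def)
    qed
    then have "\<forall>\<phi>\<in>fst ` S. depth \<phi> = 0" by force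
    then show ?thesis using mc_L0 by blast
  qed
  show ?case unfolding mc_Box xeval.simps
  proof
    assume "\<exists>S. finite S \<and> S \<subseteq> \<Theta> \<and> fst ` S \<subseteq> \<Sigma> \<and> sC \<Theta> (snd ` S) p"
    then obtain S where S: "finite S" "S \<subseteq> \<Theta>" "fst ` S \<subseteq> \<Sigma>" "sC \<Theta> (snd ` S) p" by blast
    have "\<forall>\<phi>\<in>fst ` S. eval (\<lambda>x. Atom x \<in> \<Sigma>) \<phi>" using eq[OF S(2)] S(3) by simp
    then show "\<exists>S. finite S \<and> S \<subseteq> \<Theta> \<and> (\<forall>\<phi>\<in>fst ` S. eval (\<lambda>x. Atom x \<in> \<Sigma>) \<phi>) \<and> sC \<Theta> (snd ` S) p"
      using S by (intro exI[of _ S]) simp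
  next
    assume "\<exists>S. finite S \<and> S \<subseteq> \<Theta> \<and> (\<forall>\<phi>\<in>fst ` S. eval (\<lambda>x. Atom x \<in> \<Sigma>) \<phi>) \<and> sC \<Theta> (snd ` S) p"
    then obtain S where S: "finite S" "S \<subseteq> \<Theta>" "\<forall>\<phi>\<in>fst ` S. eval (\<lambda>x. Atom x \<in> \<Sigma>) \<phi>" "sC \<Theta> (snd ` S) p" by blast
    have "fst ` S \<subseteq> \<Sigma>" using eq[OF S(2)] S(3) by simp
    then show "\<exists>S. finite S \<and> S \<subseteq> \<Theta> \<and> fst ` S \<subseteq> \<Sigma> \<and> sC \<Theta> (snd ` S) p"
      using S by (intro exI[of _ S]) simp
  qed
qed (auto simp: mc_Neg mc_Bot mc_Top mc_And mc_Or mc_Imp)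

end

lemma models_iff: "M \<in> models \<longleftrightarrow> (\<exists>v. M = {A \<in> langL. eval v A})"
proof
  assume M: "M \<in> models"
  have Mp: "M \<subseteq> langL" "cl_consistent M" using M by (simp_all add: models_def)
  then obtain v where v: "\<forall>A\<in>M. eval v A" by (auto simp: cl_consistent_def)
  have sub: "M \<subseteq> {A \<in> langL. eval v A}" using Mp(1) v by blast
  have "cl_consistent {A \<in> langL. eval v A}" by (auto simp: cl_consistent_def)
  moreover have "{A \<in> langL. eval v A} \<subseteq> langL" by blast
  moreover have "\<forall>\<Gamma>'. M \<subset> \<Gamma>' \<and> \<Gamma>' \<subseteq> langL \<longrightarrow> \<not> cl_consistent \<Gamma>'" using M by (simp add: models_def)
  ultimately have "\<not> M \<subset> {A \<in> langL. eval v A}" by metis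
  then have "M = {A \<in> langL. eval v A}" using sub by blast
  then show "\<exists>v. M = {A \<in> langL. eval v A}" by blast
next
  assume "\<exists>v. M = {A \<in> langL. eval v A}"
  then obtain v where M: "M = {A \<in> langL. eval v A}" by blast
  have "\<not> cl_consistent \<Gamma>'" if G: "M \<subset> \<Gamma>'" "\<Gamma>' \<subseteq> langL" for \<Gamma>'
  proof
    assume c: "cl_consistent \<Gamma>'"
    obtain A where A: "A \<in> \<Gamma>'" "A \<notin> M" using psubset_imp_ex_mem[OF G(1)] by blast
    then have "A \<in> langL" "\<not> eval v A" using G M by auto
    then have "Neg A \<in> M" using M by (auto simp: langL_def)
    then have "Neg A \<in> \<Gamma>'" using G by blast
    then show False using c A(1) unfolding cl_consistent_def by (metis eval.simps(4))
  qed
  moreover have "M \<subseteq> langL" using M by blast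
  moreover have "cl_consistent M" unfolding cl_consistent_def using M by blast
  ultimately show "M \<in> models" unfolding models_def by blast
qed

lemma ext_mc:
  assumes Th: "\<forall>(\<phi>, \<psi>) \<in> \<Theta>. \<phi> \<in> langL \<and> \<psi> \<in> langL"
  shows "max_box_consistent \<Theta> {A. xeval \<Theta> v A}"
proof -
  have bc: "box_consistent \<Theta> {A. xeval \<Theta> v A}"
    unfolding box_consistent_def
  proof
    assume "derivable \<Theta> {A. xeval \<Theta> v A} {}"
    then obtain n where "calc \<Theta> n (sC \<Theta>) {A. xeval \<Theta> v A} {}" by (auto simp: derivable_iff)
    from sound[OF Th this, of v] show False by simp
  qed
  have "\<not> box_consistent \<Theta> \<Sigma>'" if G: "{A. xeval \<Theta> v A} \<subset> \<Sigma>'" for \<Sigma>'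
  proof -
    obtain A where A: "A \<in> \<Sigma>'" "\<not> xeval \<Theta> v A" using psubset_imp_ex_mem[OF G] by blast
    then have "Neg A \<in> \<Sigma>'" using psubset_imp_subset[OF G] by auto
    then have "calc \<Theta> 0 (sC \<Theta>) \<Sigma>' {}" using A by (intro c_negax'[of A])
    then show ?thesis unfolding box_consistent_def using der0 by blast
  qed
  then show ?thesis using bc by (simp add: max_box_consistent_def)
qed

theorem mainTheorem14:
  fixes \<Theta> :: "('a fm \<times> 'a fm) set"
  assumes "\<forall>(\<phi>, \<psi>) \<in> \<Theta>. \<phi> \<in> langL \<and> \<psi> \<in> langL"
  shows "bij_betw (\<lambda>\<Sigma>. \<Sigma> \<inter> langL) {\<Sigma>. max_box_consistent \<Theta> \<Sigma>} models"
proof -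
  note Th = assms
  have L: "\<Sigma> \<inter> langL = {A \<in> langL. eval (\<lambda>x. Atom x \<in> \<Sigma>) A}" if "max_box_consistent \<Theta> \<Sigma>" for \<Sigma>
  proof (rule set_eqI)
    fix A
    show "A \<in> \<Sigma> \<inter> langL \<longleftrightarrow> A \<in> {A \<in> langL. eval (\<lambda>x. Atom x \<in> \<Sigma>) A}"
    proof (cases "depth A = 0")
      case True
      have "A \<in> \<Sigma> \<longleftrightarrow> eval (\<lambda>x. Atom x \<in> \<Sigma>) A" by (rule mc_L0[OF that True])
      then show ?thesis using True by (simp only: langL_def mem_Collect_eq Int_iff) simp
    next
      case False then show ?thesis by (simp add: langL_def)
    qed
  qed
  have T: "\<Sigma> = {A. xeval \<Theta> (\<lambda>x. Atom x \<in> \<Sigma>) A}" if "max_box_consistent \<Theta> \<Sigma>" for \<Sigma>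
  proof (rule set_eqI)
    fix A
    show "A \<in> \<Sigma> \<longleftrightarrow> A \<in> {A. xeval \<Theta> (\<lambda>x. Atom x \<in> \<Sigma>) A}"
      unfolding mem_Collect_eq by (rule mc_truth[OF that Th])
  qed
  show ?thesis unfolding bij_betw_def
  proof (intro conjI)
    show "inj_on (\<lambda>\<Sigma>. \<Sigma> \<inter> langL) {\<Sigma>. max_box_consistent \<Theta> \<Sigma>}"
    proof (rule inj_onI)
      fix \<Sigma>1 \<Sigma>2 assume h: "\<Sigma>1 \<in> {\<Sigma>. max_box_consistent \<Theta> \<Sigma>}" "\<Sigma>2 \<in> {\<Sigma>. max_box_consistent \<Theta> \<Sigma>}"
        "\<Sigma>1 \<inter> langL = \<Sigma>2 \<inter> langL"
      have eqv: "(\<lambda>x. Atom x \<in> \<Sigma>1) = (\<lambda>x. Atom x \<in> \<Sigma>2)"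
      proof (rule ext)
        fix x :: 'a
        have a: "Atom x \<in> langL" by (simp add: langL_def)
        show "(Atom x \<in> \<Sigma>1) = (Atom x \<in> \<Sigma>2)" using h(3) a by (metis Int_iff)
      qed
      have "\<Sigma>1 = {A. xeval \<Theta> (\<lambda>x. Atom x \<in> \<Sigma>1) A}" by (rule T) (use h(1) in simp)
      also have "\<dots> = {A. xeval \<Theta> (\<lambda>x. Atom x \<in> \<Sigma>2) A}" by (simp only: eqv)
      also have "\<dots> = \<Sigma>2" by (rule T[symmetric]) (use h(2) in simp)
      finally show "\<Sigma>1 = \<Sigma>2" .
    qed
  next
    show "(\<lambda>\<Sigma>. \<Sigma> \<inter> langL) ` {\<Sigma>. max_box_consistent \<Theta> \<Sigma>} = models"
    proof
      show "(\<lambda>\<Sigma>. \<Sigma> \<inter> langL) ` {\<Sigma>. max_box_consistent \<Theta> \<Sigma>} \<subseteq> models"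
        using L by (auto simp: models_iff)
    next
      show "models \<subseteq> (\<lambda>\<Sigma>. \<Sigma> \<inter> langL) ` {\<Sigma>. max_box_consistent \<Theta> \<Sigma>}"
      proof
        fix M :: "'a fm set" assume "M \<in> models"
        then obtain v :: "'a \<Rightarrow> bool" where M: "M = {A \<in> langL. eval v A}" by (auto simp: models_iff)
        have "M = {A. xeval \<Theta> v A} \<inter> langL" using M xeval_L by (auto simp: langL_def)
        then show "M \<in> (\<lambda>\<Sigma>. \<Sigma> \<inter> langL) ` {\<Sigma>. max_box_consistent \<Theta> \<Sigma>}"
          using ext_mc[OF Th] by blast
      qed
    qed
  qed
qed

end
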